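(* Let $K:[0,1]\times\mathbb{R}^n\to\mathbb{R}^n$ and $g:[0,1]\to\mathbb{R}^n$ be continuous, and let $X=C([0,1],\mathbb{R}^n)$ with the supremum norm $\|\cdot\|_\infty$. Let $f:[0,\infty)\to(0,\infty)$ be a Lebesgue integrable mapping which is summable (finite integral on each compact subset of $[0,\infty)$) and such that $\int_0^{\varepsilon} f(\lambda)\,d\lambda>0$ for each $\varepsilon>0$. Suppose there exist $\alpha\in(0,\tfrac12]$, $\psi\in\Psi$, $\varphi\in\Phi_u$ and $F\in\mathcal{C}$ such that for all $x,y\in X$ and $t\in[0,1]$, the inequality $\alpha\,\big|x(t)-g(t)-\int_0^t K(s,x(s))\,ds\big|\le |x(t)-y(t)|$ implies $$\psi\Big(\int_0^{|K(t,x(t))-K(t,y(t))|} f(\lambda)\,d\lambda\Big)\le F\Big(\psi\Big(\int_0^{|x(t)-y(t)|} f(\lambda)\,d\lambda\Big),\ \varphi\Big(\int_0^{|x(t)-y(t)|} f(\lambda)\,d\lambda\Big)\Big).$$ Then the integral equation $x(t)=g(t)+\int_0^t K(s,x(s))\,ds$, $t\in[0,1]$, has a unique solution $x\in X$.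
   Context: A $C$-class function is a continuous function $F:[0,\infty)^2\to\mathbb{R}$ such that for all $s,t\in[0,\infty)$: (1) $F(s,t)\le s$; (2) $F(s,t)=s$ implies $s=0$ or $t=0$. $\mathcal{C}$ denotes the class of all $C$-class functions. $\Phi_u$ denotes the class of functions $\varphi:[0,\infty)\to[0,\infty)$ that are continuous, satisfy $\varphi(t)>0$ for $t>0$, and $\varphi(0)\ge 0$. $\Psi$ denotes the set of functions $\psi:[0,\infty)\to[0,\infty)$ that are continuous and strictly increasing with $\psi(t)=0$ if and only if $t=0$. *)

theory Defs
  imports "HOL-Analysis.Analysis"
begin

definition C_class :: "(real \<Rightarrow> real \<Rightarrow> real) \<Rightarrow> bool" where
  "C_class F \<longleftrightarrow> continuous_on ({0..} \<times> {0..}) (\<lambda>(s,t). F s t) \<and>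
     (\<forall>s\<ge>0. \<forall>t\<ge>0. F s t \<le> s \<and> (F s t = s \<longrightarrow> s = 0 \<or> t = 0))"

definition Phi_u :: "(real \<Rightarrow> real) \<Rightarrow> bool" where
  "Phi_u \<phi> \<longleftrightarrow> continuous_on {0..} \<phi> \<and> (\<forall>t\<ge>0. \<phi> t \<ge> 0) \<and>
     (\<forall>t>0. \<phi> t > 0) \<and> \<phi> 0 \<ge> 0"

definition Psi :: "(real \<Rightarrow> real) \<Rightarrow> bool" where
  "Psi \<psi> \<longleftrightarrow> continuous_on {0..} \<psi> \<and> (\<forall>t\<ge>0. \<psi> t \<ge> 0) \<and>
     strict_mono_on {0..} \<psi> \<and> (\<forall>t\<ge>0. \<psi> t = 0 \<longleftrightarrow> t = 0)"

end

theory Submission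
  imports Defs
begin


lemma int_pow: assumes "0 \<le> t"
  shows "integral {0..t} (\<lambda>s::real. M * s^k / fact k) = M * t^Suc k / fact (Suc k)"
proof -
  have "((\<lambda>s::real. M * s^k / fact k) has_integral (M * t^Suc k / fact (Suc k) - M * 0^Suc k / fact (Suc k))) {0..t}"
  proof (rule fundamental_theorem_of_calculus[OF assms, of "\<lambda>s. M * s^Suc k / fact (Suc k)"])
    fix x :: real assume "x \<in> {0..t}"
    have "((\<lambda>s. M * s^Suc k / fact (Suc k)) has_real_derivative M * (real (Suc k) * x^k) / fact (Suc k)) (at x within {0..t})"
      using DERIV_cdivide[OF DERIV_cmult[OF DERIV_pow[of "Suc k" x "{0..t}"]], of M "fact (Suc k)"] by simp
    moreover have "M * (real (Suc k) * x^k) / fact (Suc k) = M * x^k / fact k"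
      by (simp add: fact_Suc field_simps del: of_nat_Suc)
    ultimately show "((\<lambda>s. M * s^Suc k / fact (Suc k)) has_vector_derivative M * x^k / fact k) (at x within {0..t})"
      by (simp add: has_real_derivative_iff_has_vector_derivative[symmetric])
  qed
  then have "((\<lambda>s::real. M * s^k / fact k) has_integral (M * t^Suc k / fact (Suc k))) {0..t}" by simp
  then show ?thesis by (rule integral_unique)
qed

lemma iter_bound:
  fixes D :: "nat \<Rightarrow> real \<Rightarrow> real"
  assumes c: "\<And>k. continuous_on {0..1} (D k)"
    and b0: "\<And>t. t \<in> {0..1} \<Longrightarrow> D 0 t \<le> M"
    and st: "\<And>k t. t \<in> {0..1} \<Longrightarrow> D (Suc k) t \<le> integral {0..t} (D k)"
  shows "t \<in> {0..1} \<Longrightarrow> D k t \<le> M * t^k / fact k"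
proof (induction k arbitrary: t)
  case 0 then show ?case using b0 by simp
next
  case (Suc k)
  have "D (Suc k) t \<le> integral {0..t} (D k)" using st Suc.prems .
  also have "\<dots> \<le> integral {0..t} (\<lambda>s. M * s^k / fact k)"
  proof (rule integral_le)
    show "D k integrable_on {0..t}"
      using Suc.prems by (intro integrable_continuous_real continuous_on_subset[OF c]) auto
    show "(\<lambda>s. M * s^k / fact k) integrable_on {0..t}"
      by (intro integrable_continuous_real continuous_intros) simp
    show "\<And>x. x \<in> {0..t} \<Longrightarrow> D k x \<le> M * x ^ k / fact k"
      using Suc.prems Suc.IH by auto
  qed
  also have "\<dots> = M * t^Suc k / fact (Suc k)" using Suc.prems int_pow by auto
  finally show ?case .
qed

lemma I_le:
  fixes f \<psi> \<phi> :: "real \<Rightarrow> real" and F :: "real \<Rightarrow> real \<Rightarrow> real"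
  assumes f_pos: "\<forall>r\<ge>0. f r > 0"
    and f_int: "\<forall>b\<ge>0. f integrable_on {0..b}"
    and f_eps: "\<forall>\<epsilon>>0. integral {0..\<epsilon>} f > 0"
    and \<psi>: "continuous_on {0..} \<psi> \<and> (\<forall>t\<ge>0. \<psi> t \<ge> 0) \<and>
     strict_mono_on {0..} \<psi> \<and> (\<forall>t\<ge>0. \<psi> t = 0 \<longleftrightarrow> t = 0)"
    and \<phi>: "(\<forall>t\<ge>0. \<phi> t \<ge> 0) \<and> (\<forall>t>0. \<phi> t > 0)"
    and F: "\<forall>s\<ge>0. \<forall>t\<ge>0. F s t \<le> s \<and> (F s t = s \<longrightarrow> s = 0 \<or> t = 0)"
    and a: "0 \<le> a" and b: "0 \<le> b"
    and h: "\<psi> (integral {0..a} f) \<le> F (\<psi> (integral {0..b} f)) (\<phi> (integral {0..b} f))"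
  shows "a \<le> b"
proof -
  have Inn: "0 \<le> integral {0..c} f" if "0 \<le> c" for c
    using f_int f_pos that by (intro integral_nonneg) auto
  show ?thesis
  proof (cases "b = 0")
    case True
    have I0: "integral {0..b} f = 0" using True by simp
    have "\<psi> 0 = 0" using \<psi> by simp
    moreover have "\<phi> 0 \<ge> 0" using \<phi> by simp
    ultimately have "F (\<psi> (integral {0..b} f)) (\<phi> (integral {0..b} f)) \<le> 0"
      using F I0 by simp
    then have "\<psi> (integral {0..a} f) \<le> 0" using h by linarith
    then have "\<psi> (integral {0..a} f) = 0" using \<psi> Inn[OF a] by force
    then have "integral {0..a} f = 0" using \<psi> Inn[OF a] by blast
    then have "\<not> a > 0" using f_eps by force
    then show ?thesis using True a by simp
  next
    case False
    then have bp: "b > 0" using b by simp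
    have Ib: "integral {0..b} f > 0" using f_eps bp by blast
    have p1: "\<psi> (integral {0..b} f) > 0" using \<psi> Ib
      by (metis less_eq_real_def)
    have p2: "\<phi> (integral {0..b} f) > 0" using \<phi> Ib by blast
    have "F (\<psi> (integral {0..b} f)) (\<phi> (integral {0..b} f)) < \<psi> (integral {0..b} f)"
      using F p1 p2 by (metis less_eq_real_def less_irrefl)
    with h have lt: "\<psi> (integral {0..a} f) < \<psi> (integral {0..b} f)" by linarith
    show ?thesis
    proof (rule ccontr)
      assume "\<not> a \<le> b"
      then have ab: "b \<le> a" by simp
      have "integral {0..b} f + integral {b..a} f = integral {0..a} f"
        by (rule Henstock_Kurzweil_Integration.integral_combine[OF b ab]) (use f_int a in auto)
      moreover have "f integrable_on {b..a}"
        by (rule integrable_subinterval_real[OF f_int[rule_format, OF a]]) (use b in auto)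
      then have "0 \<le> integral {b..a} f"
        by (rule integral_nonneg) (use f_pos b in \<open>auto intro: less_imp_le\<close>)
      ultimately have "integral {0..b} f \<le> integral {0..a} f" by linarith
      then have "\<psi> (integral {0..b} f) \<le> \<psi> (integral {0..a} f)"
      proof (cases "integral {0..b} f = integral {0..a} f")
        case False
        then have "integral {0..b} f < integral {0..a} f" using \<open>integral {0..b} f \<le> integral {0..a} f\<close> by simp
        moreover have "strict_mono_on {0..} \<psi>" using \<psi> by blast
        ultimately show ?thesis using Inn[OF a] Inn[OF b] by (simp add: strict_mono_onD less_imp_le)
      qed simp
      with lt show False by simp
    qed
  qed
qed



theorem theorem4p6:
  fixes K :: "real \<Rightarrow> real ^ 'n \<Rightarrow> real ^ 'n"
    and g :: "real \<Rightarrow> real ^ 'n"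
    and f :: "real \<Rightarrow> real"
    and \<alpha> :: real
    and \<psi> \<phi> :: "real \<Rightarrow> real"
    and F :: "real \<Rightarrow> real \<Rightarrow> real"
  assumes K_cont: "continuous_on ({0..1} \<times> UNIV) (\<lambda>(t, u). K t u)"
    and g_cont: "continuous_on {0..1} g"
    and f_pos: "\<forall>r\<ge>0. f r > 0"
    and f_int: "\<forall>b\<ge>0. f integrable_on {0..b}"
    and f_eps: "\<forall>\<epsilon>>0. integral {0..\<epsilon>} f > 0"
    and \<alpha>: "0 < \<alpha>" "\<alpha> \<le> 1/2"
    and \<psi>: "Psi \<psi>" and \<phi>: "Phi_u \<phi>" and F: "C_class F"
    and contr: "\<forall>x y. continuous_on {0..1} x \<longrightarrow> continuous_on {0..1} y \<longrightarrow>
        (\<forall>t\<in>{0..1}.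
          \<alpha> * norm (x t - g t - integral {0..t} (\<lambda>s. K s (x s))) \<le> norm (x t - y t) \<longrightarrow>
          \<psi> (integral {0..norm (K t (x t) - K t (y t))} f)
            \<le> F (\<psi> (integral {0..norm (x t - y t)} f)) (\<phi> (integral {0..norm (x t - y t)} f)))"
  shows "\<exists>x. continuous_on {0..1} x \<and>
           (\<forall>t\<in>{0..1}. x t = g t + integral {0..t} (\<lambda>s. K s (x s))) \<and>
           (\<forall>y. continuous_on {0..1} y \<and>
                (\<forall>t\<in>{0..1}. y t = g t + integral {0..t} (\<lambda>s. K s (y s)))
                \<longrightarrow> (\<forall>t\<in>{0..1}. y t = x t))"
  proof -
  define T where "T = (\<lambda>(x::real \<Rightarrow> real^'n) t. g t + integral {0..t} (\<lambda>s. K s (x s)))"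
  have Kc: "continuous_on {0..1} (\<lambda>s. K s (x s))" if "continuous_on {0..1} x" for x
  proof -
    have "continuous_on {0..1} (\<lambda>s. (\<lambda>(t, u). K t u) (s, x s))"
      by (rule continuous_on_compose2[OF K_cont]) (auto intro!: continuous_intros that)
    then show ?thesis by simp
  qed
  have Tc: "continuous_on {0..1} (T x)" if "continuous_on {0..1} x" for x
    unfolding T_def using Kc[OF that] g_cont
    by (auto intro!: continuous_intros indefinite_integral_continuous_1 integrable_continuous_real)
  have Lip: "norm (K t (x t) - K t (y t)) \<le> norm (x t - y t)"
    if "continuous_on {0..1} x" "continuous_on {0..1} y" "t \<in> {0..1}"
       "\<alpha> * norm (x t - T x t) \<le> norm (x t - y t)" for x y t
  proof -
    have "\<psi> (integral {0..norm (K t (x t) - K t (y t))} f)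
            \<le> F (\<psi> (integral {0..norm (x t - y t)} f)) (\<phi> (integral {0..norm (x t - y t)} f))"
    proof -
      have c1: "\<forall>t\<in>{0..1}.
          \<alpha> * norm (x t - g t - integral {0..t} (\<lambda>s. K s (x s))) \<le> norm (x t - y t) \<longrightarrow>
          \<psi> (integral {0..norm (K t (x t) - K t (y t))} f)
            \<le> F (\<psi> (integral {0..norm (x t - y t)} f)) (\<phi> (integral {0..norm (x t - y t)} f))"
        using contr that(1,2) by blast
      have "x t - g t - integral {0..t} (\<lambda>s. K s (x s)) = x t - T x t"
        unfolding T_def by (simp add: algebra_simps)
      then have "\<alpha> * norm (x t - g t - integral {0..t} (\<lambda>s. K s (x s))) \<le> norm (x t - y t)"
        using that(4) by (simp only:)
      then show ?thesis using c1 that(3) by blast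
    qed
    note hh = this
    have p1: "continuous_on {0..} \<psi> \<and> (\<forall>t\<ge>0. \<psi> t \<ge> 0) \<and>
     strict_mono_on {0..} \<psi> \<and> (\<forall>t\<ge>0. \<psi> t = 0 \<longleftrightarrow> t = 0)" using \<psi> by (simp add: Psi_def)
    have p2: "(\<forall>t\<ge>0. \<phi> t \<ge> 0) \<and> (\<forall>t>0. \<phi> t > 0)" using \<phi> by (simp add: Phi_u_def)
    have p3: "\<forall>s\<ge>0. \<forall>t\<ge>0. F s t \<le> s \<and> (F s t = s \<longrightarrow> s = 0 \<or> t = 0)" using F by (simp add: C_class_def)
    show ?thesis
      by (rule I_le[OF f_pos f_int f_eps p1 p2 p3 norm_ge_zero norm_ge_zero hh])
  qed
  have step: "norm (T x t - T y t) \<le> integral {0..t} (\<lambda>s. norm (x s - y s))"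
    if "continuous_on {0..1} x" "continuous_on {0..1} y" "t \<in> {0..1}"
       "\<And>s. s \<in> {0..t} \<Longrightarrow> norm (K s (x s) - K s (y s)) \<le> norm (x s - y s)" for x y t
  proof -
    have sub: "{0..t} \<subseteq> {0..1}" using that(3) by auto
    have ix: "(\<lambda>s. K s (x s)) integrable_on {0..t}"
      by (rule integrable_continuous_real, rule continuous_on_subset[OF Kc[OF that(1)] sub])
    have iy: "(\<lambda>s. K s (y s)) integrable_on {0..t}"
      by (rule integrable_continuous_real, rule continuous_on_subset[OF Kc[OF that(2)] sub])
    have "T x t - T y t = integral {0..t} (\<lambda>s. K s (x s) - K s (y s))"
      unfolding T_def by (simp add: integral_diff[OF ix iy])
    also have "norm \<dots> \<le> integral {0..t} (\<lambda>s. norm (x s - y s))"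
    proof (rule integral_norm_bound_integral)
      show "(\<lambda>s. K s (x s) - K s (y s)) integrable_on {0..t}" using ix iy by (rule integrable_diff)
      have "continuous_on {0..1} (\<lambda>s. norm (x s - y s))"
        using that(1,2) by (intro continuous_intros)
      then show "(\<lambda>s. norm (x s - y s)) integrable_on {0..t}"
        by (intro integrable_continuous_real continuous_on_subset[OF _ sub])
      show "\<And>s. s \<in> {0..t} \<Longrightarrow> norm (K s (x s) - K s (y s)) \<le> norm (x s - y s)"
        by (rule that(4))
    qed
    finally show ?thesis .
  qed
  define xs where "xs = (\<lambda>k. (T ^^ k) g)"
  have xsS: "xs (Suc k) = T (xs k)" for k unfolding xs_def by simp
  have xsc: "continuous_on {0..1} (xs k)" for k
    by (induction k) (auto simp: xs_def g_cont intro: Tc)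
  define D where "D = (\<lambda>k t. norm (xs (Suc k) t - xs k t))"
  have Dc: "continuous_on {0..1} (D k)" for k
    unfolding D_def using xsc by (intro continuous_intros) auto
  obtain M where M: "\<And>t. t \<in> {0..1} \<Longrightarrow> D 0 t \<le> M"
  proof -
    have "compact (D 0 ` {0..1})" by (rule compact_continuous_image[OF Dc]) simp
    then obtain B where B: "\<forall>y\<in>D 0 ` {0..1}. norm y \<le> B" using compact_imp_bounded bounded_iff by metis
    have "D 0 t \<le> B" if "t \<in> {0..1}" for t
      using B that by (metis abs_le_D1 imageI real_norm_def)
    then show ?thesis using that by blast
  qed
  have Dst: "D (Suc k) t \<le> integral {0..t} (D k)" if "t \<in> {0..1}" for k t
  proof -
    have "D (Suc k) t = norm (T (xs (Suc k)) t - T (xs k) t)" unfolding D_def xsS[symmetric] ..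
    also have "\<dots> \<le> integral {0..t} (\<lambda>s. norm (xs (Suc k) s - xs k s))"
    proof (rule step[OF xsc xsc that])
      fix s assume s: "s \<in> {0..t}"
      then have s1: "s \<in> {0..1}" using that by auto
      have "\<alpha> * norm (xs k s - T (xs k) s) \<le> norm (xs k s - xs (Suc k) s)"
        using \<alpha> by (simp add: xsS[symmetric] mult_left_le_one_le)
      from Lip[OF xsc xsc s1 this] show "norm (K s (xs (Suc k) s) - K s (xs k s)) \<le> norm (xs (Suc k) s - xs k s)"
        by (simp add: norm_minus_commute)
    qed
    finally show ?thesis unfolding D_def .
  qed
  have Db: "D k t \<le> M * t^k / fact k" if "t \<in> {0..1}" for k t
    using iter_bound[of D M, OF Dc M Dst that] .
  have M0: "0 \<le> M" using M[of 0] by (simp add: D_def) (meson norm_ge_zero order_trans)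
  have Db1: "D k t \<le> M / fact k" if "t \<in> {0..1}" for k t
  proof -
    have "t^k \<le> 1" using that by (auto intro: power_le_one)
    then have "M * t^k / fact k \<le> M / fact k" using M0
      by (intro divide_right_mono) (auto intro: mult_left_le)
    then show ?thesis using Db[OF that, of k] by linarith
  qed
  have sumM: "summable (\<lambda>k. M / fact k)"
    using summable_mult[OF summable_exp[of "1::real"], of M] by (simp add: divide_inverse)
  have ul: "uniform_limit {0..1} (\<lambda>n t. \<Sum>i<n. xs (Suc i) t - xs i t) (\<lambda>t. \<Sum>i. xs (Suc i) t - xs i t) sequentially"
    by (rule Weierstrass_m_test[OF _ sumM]) (use Db1 in \<open>auto simp: D_def\<close>)
  define xstar where "xstar = (\<lambda>t. xs 0 t + (\<Sum>i. xs (Suc i) t - xs i t))"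
  have tel: "(\<Sum>i<n. xs (Suc i) t - xs i t) = xs n t - xs 0 t" for n t
    by (rule sum_lessThan_telescope)
  have xstar_c: "continuous_on {0..1} xstar"
  proof -
    have "continuous_on {0..1} (\<lambda>t. \<Sum>i. xs (Suc i) t - xs i t)"
    proof (rule uniform_limit_theorem[OF _ ul])
      show "\<forall>\<^sub>F n in sequentially. continuous_on {0..1} (\<lambda>t. \<Sum>i<n. xs (Suc i) t - xs i t)"
        by (intro always_eventually allI continuous_on_sum ballI continuous_on_diff xsc)
    qed simp
    then show ?thesis unfolding xstar_def using xsc by (intro continuous_intros)
  qed
  have conv: "(\<lambda>k. xs k t) \<longlonglongrightarrow> xstar t" if "t \<in> {0..1}" for t
  proof -
    have "(\<lambda>n. \<Sum>i<n. xs (Suc i) t - xs i t) \<longlonglongrightarrow> (\<Sum>i. xs (Suc i) t - xs i t)"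
      by (rule tendsto_uniform_limitI[OF ul that])
    then have "(\<lambda>n. xs 0 t + (\<Sum>i<n. xs (Suc i) t - xs i t)) \<longlonglongrightarrow> xstar t"
      unfolding xstar_def by (intro tendsto_add tendsto_const)
    then show ?thesis by (simp add: tel)
  qed
  obtain B0 where B0: "\<And>t. t \<in> {0..1} \<Longrightarrow> norm (xs 0 t) \<le> B0"
  proof -
    have "compact (xs 0 ` {0..1})" by (rule compact_continuous_image[OF xsc]) simp
    then obtain B where B: "\<forall>y\<in>xs 0 ` {0..1}. norm y \<le> B" using compact_imp_bounded bounded_iff by metis
    have "norm (xs 0 t) \<le> B" if "t \<in> {0..1}" for t
      using B that by blast
    then show ?thesis using that by blast
  qed
  define R where "R = B0 + (\<Sum>i. M / fact i)"
  have xsb: "norm (xs k t) \<le> R" if "t \<in> {0..1}" for k t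
  proof -
    have "norm (xs k t) = norm (xs 0 t + (\<Sum>i<k. xs (Suc i) t - xs i t))" by (simp add: tel)
    also have "\<dots> \<le> norm (xs 0 t) + (\<Sum>i<k. norm (xs (Suc i) t - xs i t))"
      by (rule order_trans[OF norm_triangle_ineq]) (simp add: norm_sum)
    also have "(\<Sum>i<k. norm (xs (Suc i) t - xs i t)) \<le> (\<Sum>i<k. M / fact i)"
      by (rule sum_mono) (use Db1[OF that] in \<open>simp add: D_def\<close>)
    also have "(\<Sum>i<k. M / fact i) \<le> (\<Sum>i. M / fact i)"
      by (rule sum_le_suminf[OF sumM]) (use M0 in auto)
    finally show ?thesis unfolding R_def using B0[OF that] by linarith
  qed
  obtain BK where BK: "\<And>s u. s \<in> {0..1} \<Longrightarrow> u \<in> cball 0 R \<Longrightarrow> norm (K s u) \<le> BK"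
  proof -
    have "compact ((\<lambda>(t, u). K t u) ` ({0..1} \<times> cball 0 R))"
      by (rule compact_continuous_image[OF continuous_on_subset[OF K_cont]])
         (auto intro: compact_Times)
    then obtain B where B: "\<forall>y\<in>(\<lambda>(t, u). K t u) ` ({0..1} \<times> cball 0 R). norm y \<le> B"
      using compact_imp_bounded bounded_iff by metis
    have "norm (K s u) \<le> B" if "s \<in> {0..1}" "u \<in> cball 0 R" for s u
    proof -
      have "K s u \<in> (\<lambda>(t, u). K t u) ` ({0..1} \<times> cball 0 R)"
        using that by (auto intro!: image_eqI[of _ _ "(s,u)"])
      then show ?thesis using B by blast
    qed
    then show ?thesis using that by blast
  qed
  have fix_pt: "xstar t = T xstar t" if t: "t \<in> {0..1}" for t
  proof -
    have sub: "{0..t} \<subseteq> {0..1}" using t by auto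
    have "(\<lambda>k. integral {0..t} (\<lambda>s. K s (xs k s))) \<longlonglongrightarrow> integral {0..t} (\<lambda>s. K s (xstar s))"
    proof (rule dominated_convergence(2))
      show "(\<lambda>s. K s (xs k s)) integrable_on {0..t}" for k
        by (rule integrable_continuous_real, rule continuous_on_subset[OF Kc[OF xsc] sub])
      show "(\<lambda>s. BK) integrable_on {0..t}" by (rule integrable_continuous_real) (rule continuous_on_const)
      show "norm (K s (xs k s)) \<le> BK" if "s \<in> {0..t}" for k s
        using BK[of s "xs k s"] xsb[of s k] that sub by auto
      show "(\<lambda>k. K s (xs k s)) \<longlonglongrightarrow> K s (xstar s)" if s: "s \<in> {0..t}" for s
      proof -
        have s1: "s \<in> {0..1}" using s sub by auto
        have "((\<lambda>k. (\<lambda>(t, u). K t u) (s, xs k s)) \<longlongrightarrow> (\<lambda>(t, u). K t u) (s, xstar s)) sequentially"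
          by (rule continuous_on_tendsto_compose[OF K_cont])
             (use s1 conv[OF s1] in \<open>auto intro!: tendsto_Pair\<close>)
        then show ?thesis by simp
      qed
    qed
    then have "(\<lambda>k. T (xs k) t) \<longlonglongrightarrow> T xstar t"
      unfolding T_def by (intro tendsto_add tendsto_const) simp
    then have "(\<lambda>k. xs (Suc k) t) \<longlonglongrightarrow> T xstar t" by (simp add: xsS)
    moreover have "(\<lambda>k. xs (Suc k) t) \<longlonglongrightarrow> xstar t" using conv[OF t] by (rule LIMSEQ_Suc)
    ultimately show ?thesis using LIMSEQ_unique by blast
  qed
  have uniq: "y t = xstar t"
    if yc: "continuous_on {0..1} y" and ys: "\<forall>t\<in>{0..1}. y t = T y t" and t: "t \<in> {0..1}" for y t
  proof -
    define E where "E = (\<lambda>t. norm (y t - xstar t))"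
    have Ec: "continuous_on {0..1} E" unfolding E_def using yc xstar_c by (intro continuous_intros)
    obtain N where N: "\<And>t. t \<in> {0..1} \<Longrightarrow> E t \<le> N"
    proof -
      have "compact (E ` {0..1})" by (rule compact_continuous_image[OF Ec]) simp
      then obtain B where B: "\<forall>y\<in>E ` {0..1}. norm y \<le> B" using compact_imp_bounded bounded_iff by metis
      have "E t \<le> B" if "t \<in> {0..1}" for t
        using B that by (metis abs_le_D1 imageI real_norm_def)
      then show ?thesis using that by blast
    qed
    have Est: "E t \<le> integral {0..t} E" if t: "t \<in> {0..1}" for t
    proof -
      have "E t = norm (T y t - T xstar t)" unfolding E_def using ys fix_pt t by simp
      also have "\<dots> \<le> integral {0..t} (\<lambda>s. norm (y s - xstar s))"
      proof (rule step[OF yc xstar_c t])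
        fix s assume s: "s \<in> {0..t}"
        then have s1: "s \<in> {0..1}" using t by auto
        have "\<alpha> * norm (y s - T y s) \<le> norm (y s - xstar s)" using ys s1 by simp
        from Lip[OF yc xstar_c s1 this] show "norm (K s (y s) - K s (xstar s)) \<le> norm (y s - xstar s)" .
      qed
      finally show ?thesis unfolding E_def .
    qed
    have Eb: "E t \<le> N * t^k / fact k" for k
      using iter_bound[of "\<lambda>k. E" N, OF Ec N Est t] .
    have "(\<lambda>k. N * (inverse (fact k) * t^k)) \<longlonglongrightarrow> N * 0"
      by (intro tendsto_mult tendsto_const summable_LIMSEQ_zero[OF summable_exp])
    then have "(\<lambda>k. N * t^k / fact k) \<longlonglongrightarrow> 0" by (simp add: field_simps)
    then have "E t \<le> 0" by (rule LIMSEQ_le_const) (use Eb in auto)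
    then show ?thesis unfolding E_def by simp
  qed
  show ?thesis
  proof (intro exI conjI allI impI ballI)
    show "continuous_on {0..1} xstar" by (rule xstar_c)
    show "xstar t = g t + integral {0..t} (\<lambda>s. K s (xstar s))" if "t \<in> {0..1}" for t
      using fix_pt[OF that] unfolding T_def by simp
    show "y t = xstar t" if "continuous_on {0..1} y \<and> (\<forall>t\<in>{0..1}. y t = g t + integral {0..t} (\<lambda>s. K s (y s)))"
      and "t \<in> {0..1}" for y t
      using uniq[of y t] that unfolding T_def by auto
  qed
qed

end
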